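(* Let $F$ be a field and $\{E_1,\ldots,E_k\}$ a complete symmetric orthogonal set of idempotents in $F_{n\times n}$. Let $L=(\sigma(r,s))_{1\le r,s\le k}$ be a $k\times k$ array with entries in $\{1,\ldots,k\}$ such that each row and each column of $L$ contains each index exactly once. For each $(r,s)$ let $m_{r,s}$ be a monomial (product of non-negative powers, coefficient $1$) in a set of commuting variables $\mathbf{z}$; the same variable set is used throughout but the monomials may differ. Let $W$ be the $nk\times nk$ block matrix whose $(r,s)$ block is $m_{r,s}E_{\sigma(r,s)}$. Then $W$ is a paraunitary matrix in the variables $\mathbf{z}$, i.e. $WW^*=I_{nk}$.
   Context: For matrices over $\mathbb{C}$, $^*$ is conjugate transpose; otherwise transpose; on polynomial matrices $^*$ additionally replaces each variable $z$ by $z^{-1}$. A complete symmetric orthogonal set of idempotents is $\{E_1,\ldots,E_k\}$ with $E_i\ne0$, $E_i^2=E_i$, $E_iE_j=0$ ($i\ne j$), $\sum_iE_i=I_n$, $E_i^*=E_i$. *)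

theory Defs
  imports "Jordan_Normal_Form.Matrix" "HOL-Library.Poly_Mapping"
begin

text \<open>Involution on the base field: the paper uses complex conjugation over the
complex numbers and the identity otherwise.  We take it as a parameter that is
an involutive field automorphism (covering both cases).\<close>
definition involutive_field_aut :: "('a::field \<Rightarrow> 'a) \<Rightarrow> bool" where
  "involutive_field_aut c \<longleftrightarrow>
     (\<forall>x y. c (x + y) = c x + c y) \<and> (\<forall>x y. c (x * y) = c x * c y) \<and>
     c 1 = 1 \<and> (\<forall>x. c (c x) = x)"

definition mat_star :: "('a \<Rightarrow> 'a) \<Rightarrow> 'a mat \<Rightarrow> 'a mat" where
  "mat_star c A = mat (dim_col A) (dim_row A) (\<lambda>(i, j). c (A $$ (j, i)))"

definition mat_sum :: "nat \<Rightarrow> 'b set \<Rightarrow> ('b \<Rightarrow> 'a::comm_monoid_add mat) \<Rightarrow> 'a mat" where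
  "mat_sum n I f = mat n n (\<lambda>ij. \<Sum>i\<in>I. f i $$ ij)"

definition csos_idempotents :: "('a::field \<Rightarrow> 'a) \<Rightarrow> nat \<Rightarrow> nat \<Rightarrow> (nat \<Rightarrow> 'a mat) \<Rightarrow> bool" where
  "csos_idempotents c n k E \<longleftrightarrow>
     (\<forall>i\<in>{1..k}. E i \<in> carrier_mat n n \<and> E i \<noteq> 0\<^sub>m n n \<and> E i * E i = E i
                 \<and> mat_star c (E i) = E i) \<and>
     (\<forall>i\<in>{1..k}. \<forall>j\<in>{1..k}. i \<noteq> j \<longrightarrow> E i * E j = 0\<^sub>m n n) \<and>
     mat_sum n {1..k} E = 1\<^sub>m n"

text \<open>Laurent polynomials over 'a in the commuting variables indexed by 'v:
finitely supported maps from integer exponent vectors to coefficients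
(the group ring of the free abelian group on 'v).\<close>
type_synonym ('v, 'a) laurent = "('v \<Rightarrow>\<^sub>0 int) \<Rightarrow>\<^sub>0 'a"

definition laurent_const :: "'a::zero \<Rightarrow> ('v, 'a) laurent" where
  "laurent_const a = Poly_Mapping.single 0 a"

definition monomial :: "('v \<Rightarrow>\<^sub>0 nat) \<Rightarrow> ('v, 'a::{zero,one}) laurent" where
  "monomial e = Poly_Mapping.single (Poly_Mapping.map int e) 1"

definition laurent_star :: "('a::zero \<Rightarrow> 'a) \<Rightarrow> ('v, 'a) laurent \<Rightarrow> ('v, 'a) laurent" where
  "laurent_star c p = Poly_Mapping.map c (Poly_Mapping.map_key uminus p)"

definition lmat_star :: "('a::zero \<Rightarrow> 'a) \<Rightarrow> ('v, 'a) laurent mat \<Rightarrow> ('v, 'a) laurent mat" where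
  "lmat_star c A = mat (dim_col A) (dim_row A) (\<lambda>(i, j). laurent_star c (A $$ (j, i)))"

definition latin_square :: "nat \<Rightarrow> (nat \<Rightarrow> nat \<Rightarrow> nat) \<Rightarrow> bool" where
  "latin_square k \<sigma> \<longleftrightarrow>
     (\<forall>r\<in>{1..k}. bij_betw (\<lambda>s. \<sigma> r s) {1..k} {1..k}) \<and>
     (\<forall>s\<in>{1..k}. bij_betw (\<lambda>r. \<sigma> r s) {1..k} {1..k})"

definition block_W :: "nat \<Rightarrow> nat \<Rightarrow> (nat \<Rightarrow> 'a::field mat) \<Rightarrow> (nat \<Rightarrow> nat \<Rightarrow> nat)
    \<Rightarrow> (nat \<Rightarrow> nat \<Rightarrow> ('v \<Rightarrow>\<^sub>0 nat)) \<Rightarrow> ('v, 'a) laurent mat" where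
  "block_W n k E \<sigma> m = mat (n * k) (n * k) (\<lambda>(i, j).
     let r = i div n + 1; s = j div n + 1 in
       monomial (m r s) * laurent_const (E (\<sigma> r s) $$ (i mod n, j mod n)))"

end

theory Submission
  imports Defs
begin

lemma sum_split_nk: "(\<Sum>j\<in>{0..<n*k}. f j) = (\<Sum>s\<in>{0..<k}. \<Sum>b\<in>{0..<n}. f (s*n+b::nat))"
proof (induction k)
  case 0 then show ?case by simp
next
  case (Suc k)
  have "{0..<n*Suc k} = {0..<n*k} \<union> {n*k..<n*k+n}" by auto
  moreover have "(\<Sum>j\<in>{n*k..<n*k+n}. f j) = (\<Sum>b\<in>{0..<n}. f (k*n+b))"
    by (simp add: sum.shift_bounds_nat_ivl[symmetric] add.commute mult.commute)
  ultimately show ?case using Suc by (simp add: sum.union_disjoint)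
qed

lemma single_sum: "finite A \<Longrightarrow> Poly_Mapping.single k (\<Sum>x\<in>A. g x) = (\<Sum>x\<in>A. Poly_Mapping.single k (g x))"
  by (induction A rule: finite_induct) (simp_all add: single_add)

lemma inj_uminus_pm: "inj (uminus :: ('v \<Rightarrow>\<^sub>0 int) \<Rightarrow> _)"
  by (simp add: inj_def)

lemma star_single:
  assumes "involutive_field_aut c"
  shows "laurent_star c (Poly_Mapping.single k x) = Poly_Mapping.single (-k) (c x)"
proof -
  have c0: "c 0 = 0" using assms unfolding involutive_field_aut_def
    by (metis add_cancel_right_right add_0)
  have "Poly_Mapping.map_key uminus (Poly_Mapping.single k x) = Poly_Mapping.single (-k) x"
    using map_key_single[OF inj_uminus_pm, of "-k" x] by simp
  then show ?thesis unfolding laurent_star_def using c0 by simp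
qed

lemma W_entry:
  assumes "i < n*k" "j < n*k"
  shows "block_W n k E \<sigma> m $$ (i,j) = Poly_Mapping.single (Poly_Mapping.map int (m (i div n + 1) (j div n + 1))) (E (\<sigma> (i div n + 1) (j div n + 1)) $$ (i mod n, j mod n))"
  using assms unfolding block_W_def monomial_def laurent_const_def by (simp add: mult_single Let_def)

theorem theorem15:
  fixes c :: "'a::field \<Rightarrow> 'a"
    and n k :: nat
    and E :: "nat \<Rightarrow> 'a mat"
    and \<sigma> :: "nat \<Rightarrow> nat \<Rightarrow> nat"
    and m :: "nat \<Rightarrow> nat \<Rightarrow> ('v \<Rightarrow>\<^sub>0 nat)"
  assumes "involutive_field_aut c"
    and "csos_idempotents c n k E"
    and "latin_square k \<sigma>"
  shows "block_W n k E \<sigma> m * lmat_star c (block_W n k E \<sigma> m) = 1\<^sub>m (n * k)"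
proof -
  define W where "W = block_W n k E \<sigma> m"
  define mk where "mk r s = Poly_Mapping.map int (m r s)" for r s
  have dimW: "dim_row W = n*k" "dim_col W = n*k" unfolding W_def block_W_def by simp_all
  have Ec: "E t \<in> carrier_mat n n" if "t \<in> {1..k}" for t
    using assms(2) that unfolding csos_idempotents_def by blast
  have Eid: "E t * E t = E t" if "t \<in> {1..k}" for t
    using assms(2) that unfolding csos_idempotents_def by blast
  have Estar: "mat_star c (E t) = E t" if "t \<in> {1..k}" for t
    using assms(2) that unfolding csos_idempotents_def by blast
  have Eorth: "E t * E t' = 0\<^sub>m n n" if "t \<in> {1..k}" "t' \<in> {1..k}" "t \<noteq> t'" for t t'
    using assms(2) that unfolding csos_idempotents_def by blast
  have Esum: "mat_sum n {1..k} E = 1\<^sub>m n"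
    using assms(2) unfolding csos_idempotents_def by blast
  have Esym: "c (E t $$ (a,b)) = E t $$ (b,a)" if "t \<in> {1..k}" "a < n" "b < n" for t a b
  proof -
    have "mat_star c (E t) $$ (b,a) = c (E t $$ (a,b))"
      using Ec[OF that(1)] that unfolding mat_star_def by auto
    then show ?thesis using Estar[OF that(1)] by simp
  qed
  have row: "bij_betw (\<lambda>s. \<sigma> r s) {1..k} {1..k}" if "r \<in> {1..k}" for r
    using assms(3) that unfolding latin_square_def by blast
  have col: "bij_betw (\<lambda>r. \<sigma> r s) {1..k} {1..k}" if "s \<in> {1..k}" for s
    using assms(3) that unfolding latin_square_def by blast
  have "W * lmat_star c W = 1\<^sub>m (n * k)"
  proof (rule eq_matI)
    show "dim_row (W * lmat_star c W) = dim_row (1\<^sub>m (n * k))"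
      using dimW by simp
    show "dim_col (W * lmat_star c W) = dim_col (1\<^sub>m (n * k))"
      using dimW unfolding lmat_star_def by simp
    fix i l assume "i < dim_row (1\<^sub>m (n * k))" "l < dim_col (1\<^sub>m (n * k))"
    then have il: "i < n*k" "l < n*k" by simp_all
    then have npos: "n > 0" by (cases n) auto
    define r where "r = i div n + 1"
    define a where "a = i mod n"
    define r' where "r' = l div n + 1"
    define a' where "a' = l mod n"
    have rk: "r \<in> {1..k}" "r' \<in> {1..k}" using il npos unfolding r_def r'_def
      by (auto simp: less_mult_imp_div_less mult.commute Suc_le_eq div_less_iff_less_mult)
    have an: "a < n" "a' < n" using npos unfolding a_def a'_def by auto
    have "(W * lmat_star c W) $$ (i,l) = (\<Sum>j\<in>{0..<n*k}. W $$ (i,j) * lmat_star c W $$ (j,l))"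
      using il dimW unfolding lmat_star_def by (simp add: scalar_prod_def)
    also have "\<dots> = (\<Sum>s\<in>{0..<k}. \<Sum>b\<in>{0..<n}. W $$ (i,s*n+b) * lmat_star c W $$ (s*n+b,l))"
      by (rule sum_split_nk)
    also have "\<dots> = (\<Sum>s\<in>{0..<k}. \<Sum>b\<in>{0..<n}. Poly_Mapping.single (mk r (s+1) + - mk r' (s+1))
         (E (\<sigma> r (s+1)) $$ (a,b) * E (\<sigma> r' (s+1)) $$ (b,a')))"
    proof (intro sum.cong refl)
      fix s b assume sb: "s \<in> {0..<k}" "b \<in> {0..<n}"
      have j: "s*n+b < n*k"
      proof -
        have "s*n+b < s*n+n" using sb by simp
        also have "\<dots> = (s+1)*n" by simp
        also have "\<dots> \<le> k*n" using sb by (intro mult_right_mono) auto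
        finally show ?thesis by (simp add: mult.commute)
      qed
      have dj: "(s*n+b) div n = s" "(s*n+b) mod n = b" using sb by auto
      have s1: "s+1 \<in> {1..k}" using sb by auto
      have t: "\<sigma> r' (s+1) \<in> {1..k}" using bij_betw_apply[OF row[OF rk(2)] s1] .
      have "lmat_star c W $$ (s*n+b,l) = laurent_star c (W $$ (l, s*n+b))"
        using j il dimW unfolding lmat_star_def by simp
      also have "\<dots> = Poly_Mapping.single (- mk r' (s+1)) (E (\<sigma> r' (s+1)) $$ (b,a'))"
        unfolding W_def W_entry[OF il(2) j] star_single[OF assms(1)] dj
        using Esym[OF t an(2)] sb unfolding r'_def a'_def mk_def by simp
      finally show "W $$ (i,s*n+b) * lmat_star c W $$ (s*n+b,l) = Poly_Mapping.single (mk r (s+1) + - mk r' (s+1))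
         (E (\<sigma> r (s+1)) $$ (a,b) * E (\<sigma> r' (s+1)) $$ (b,a'))"
        unfolding W_def W_entry[OF il(1) j] dj r_def a_def mk_def by (simp add: mult_single)
    qed
    also have "\<dots> = (\<Sum>s\<in>{0..<k}. Poly_Mapping.single (mk r (s+1) + - mk r' (s+1))
         ((E (\<sigma> r (s+1)) * E (\<sigma> r' (s+1))) $$ (a,a')))"
    proof (intro sum.cong refl)
      fix s assume sb: "s \<in> {0..<k}"
      have s1: "s+1 \<in> {1..k}" using sb by auto
      have t: "\<sigma> r (s+1) \<in> {1..k}" "\<sigma> r' (s+1) \<in> {1..k}"
        using bij_betw_apply[OF row[OF rk(1)] s1] bij_betw_apply[OF row[OF rk(2)] s1] by auto
      show "(\<Sum>b\<in>{0..<n}. Poly_Mapping.single (mk r (s+1) + - mk r' (s+1))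
         (E (\<sigma> r (s+1)) $$ (a,b) * E (\<sigma> r' (s+1)) $$ (b,a'))) = Poly_Mapping.single (mk r (s+1) + - mk r' (s+1))
         ((E (\<sigma> r (s+1)) * E (\<sigma> r' (s+1))) $$ (a,a'))"
        using Ec[OF t(1)] Ec[OF t(2)] an
        by (simp add: single_sum[symmetric] scalar_prod_def)
    qed
    also have "\<dots> = 1\<^sub>m (n * k) $$ (i, l)"
    proof (cases "r = r'")
      case True
      have "(\<Sum>s\<in>{0..<k}. Poly_Mapping.single (mk r (s+1) + - mk r' (s+1))
         ((E (\<sigma> r (s+1)) * E (\<sigma> r' (s+1))) $$ (a,a')))
        = (\<Sum>s\<in>{0..<k}. Poly_Mapping.single 0 (E (\<sigma> r (s+1)) $$ (a,a')))"
      proof (intro sum.cong refl)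
        fix s assume sb: "s \<in> {0..<k}"
        have s1: "s+1 \<in> {1..k}" using sb by auto
        have t: "\<sigma> r (s+1) \<in> {1..k}"
          using bij_betw_apply[OF row[OF rk(1)] s1] .
        show "Poly_Mapping.single (mk r (s+1) + - mk r' (s+1))
         ((E (\<sigma> r (s+1)) * E (\<sigma> r' (s+1))) $$ (a,a')) = Poly_Mapping.single 0 (E (\<sigma> r (s+1)) $$ (a,a'))"
          using True Eid[OF t] by simp
      qed
      also have "\<dots> = Poly_Mapping.single 0 (\<Sum>s\<in>{0..<k}. E (\<sigma> r (s+1)) $$ (a,a'))"
        by (simp add: single_sum)
      also have "(\<Sum>s\<in>{0..<k}. E (\<sigma> r (s+1)) $$ (a,a')) = (\<Sum>s\<in>{1..k}. E (\<sigma> r s) $$ (a,a'))"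
        by (rule sum.reindex_bij_witness[where i="\<lambda>s. s - 1" and j="\<lambda>s. s + 1"]) auto
      also have "\<dots> = (\<Sum>t\<in>{1..k}. E t $$ (a,a'))"
        using sum.reindex_bij_betw[OF row[OF rk(1)], of "\<lambda>t. E t $$ (a,a')"] by simp
      also have "\<dots> = 1\<^sub>m n $$ (a,a')"
        using Esum an unfolding mat_sum_def by (metis index_mat(1) case_prod_conv)
      finally show ?thesis using il an npos True unfolding r_def r'_def a_def a'_def
        by (simp, metis div_mult_mod_eq)
    next
      case False
      have "(\<Sum>s\<in>{0..<k}. Poly_Mapping.single (mk r (s+1) + - mk r' (s+1))
         ((E (\<sigma> r (s+1)) * E (\<sigma> r' (s+1))) $$ (a,a'))) = 0"
      proof (intro sum.neutral ballI)
        fix s assume sb: "s \<in> {0..<k}"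
        have s1: "s+1 \<in> {1..k}" using sb by auto
        have t: "\<sigma> r (s+1) \<in> {1..k}" "\<sigma> r' (s+1) \<in> {1..k}"
          using bij_betw_apply[OF row[OF rk(1)] s1] bij_betw_apply[OF row[OF rk(2)] s1] by auto
        have ne: "\<sigma> r (s+1) \<noteq> \<sigma> r' (s+1)"
          using col[OF s1] rk False unfolding bij_betw_def inj_on_def by blast
        show "Poly_Mapping.single (mk r (s+1) + - mk r' (s+1))
         ((E (\<sigma> r (s+1)) * E (\<sigma> r' (s+1))) $$ (a,a')) = 0"
          using Eorth[OF t ne] an by simp
      qed
      moreover have "i \<noteq> l" using False unfolding r_def r'_def by auto
      ultimately show ?thesis using il by simp
    qed
    finally show "(W * lmat_star c W) $$ (i,l) = 1\<^sub>m (n * k) $$ (i, l)" .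
  qed
  then show ?thesis unfolding W_def .
qed

end
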